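(* For every connected graph $G$, the ordered pair $(O_{\rm SR}(G),O_{\rm R}(G))$ belongs to the set $\{(\mathcal{B},\mathcal{B}),(\mathcal{B},\mathcal{N}),(\mathcal{B},\mathcal{M}),(\mathcal{N},\mathcal{N}),(\mathcal{N},\mathcal{M}),(\mathcal{M},\mathcal{M})\}$.
   Context: All graphs are finite, simple and undirected; $d(x,y)$ is the shortest-path distance. For a connected graph $G$, a set $R\subseteq V(G)$ is a resolving set if for all distinct $x,y\in V(G)$ there is $z\in R$ with $d(x,z)\ne d(y,z)$; a set $S\subseteq V(G)$ is a strong resolving set if for all distinct $x,y\in V(G)$ there exists $z\in S$ such that $x$ lies on a $y$–$z$ geodesic or $y$ lies on an $x$–$z$ geodesic. In the Maker–Breaker resolving game (resp. strong resolving game) on $G$, Maker and Breaker alternately select a not-yet-chosen vertex of $G$; Maker wins if his selected vertices contain a resolving set (resp. strong resolving set) of $G$, and Breaker wins otherwise. In the M-game Maker moves first, in the B-game Breaker moves first. The outcome $O_{\rm R}(G)$ (resp. $O_{\rm SR}(G)$) is $\mathcal{M}$ if Maker has a winning strategy in both the M-game and the B-game, $\mathcal{B}$ if Breaker has a winning strategy in both, and $\mathcal{N}$ if the first player has a winning strategy in each. *)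

theory Defs
  imports Main
begin

definition simple_graph :: "'a set \<Rightarrow> ('a \<Rightarrow> 'a \<Rightarrow> bool) \<Rightarrow> bool" where
  "simple_graph V E \<longleftrightarrow> finite V \<and> (\<forall>x y. E x y \<longrightarrow> x \<in> V \<and> y \<in> V)
     \<and> (\<forall>x y. E x y \<longrightarrow> E y x) \<and> (\<forall>x. \<not> E x x)"

text \<open>A walk is a nonempty list of vertices, consecutive ones adjacent.
Its length is (length of list - 1).\<close>

definition walk :: "'a set \<Rightarrow> ('a \<Rightarrow> 'a \<Rightarrow> bool) \<Rightarrow> 'a list \<Rightarrow> bool" where
  "walk V E xs \<longleftrightarrow> xs \<noteq> [] \<and> set xs \<subseteq> V \<and> (\<forall>i. Suc i < length xs \<longrightarrow> E (xs ! i) (xs ! Suc i))"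

definition walk_between :: "'a set \<Rightarrow> ('a \<Rightarrow> 'a \<Rightarrow> bool) \<Rightarrow> 'a \<Rightarrow> 'a \<Rightarrow> 'a list \<Rightarrow> bool" where
  "walk_between V E x y xs \<longleftrightarrow> walk V E xs \<and> hd xs = x \<and> last xs = y"

definition connected_graph :: "'a set \<Rightarrow> ('a \<Rightarrow> 'a \<Rightarrow> bool) \<Rightarrow> bool" where
  "connected_graph V E \<longleftrightarrow> simple_graph V E \<and> V \<noteq> {}
     \<and> (\<forall>x\<in>V. \<forall>y\<in>V. \<exists>xs. walk_between V E x y xs)"

definition gdist :: "'a set \<Rightarrow> ('a \<Rightarrow> 'a \<Rightarrow> bool) \<Rightarrow> 'a \<Rightarrow> 'a \<Rightarrow> nat" where
  "gdist V E x y = (LEAST n. \<exists>xs. walk_between V E x y xs \<and> length xs = Suc n)"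

definition geodesic :: "'a set \<Rightarrow> ('a \<Rightarrow> 'a \<Rightarrow> bool) \<Rightarrow> 'a \<Rightarrow> 'a \<Rightarrow> 'a list \<Rightarrow> bool" where
  "geodesic V E y z xs \<longleftrightarrow> walk_between V E y z xs \<and> length xs = Suc (gdist V E y z)"

definition on_geodesic :: "'a set \<Rightarrow> ('a \<Rightarrow> 'a \<Rightarrow> bool) \<Rightarrow> 'a \<Rightarrow> 'a \<Rightarrow> 'a \<Rightarrow> bool" where
  "on_geodesic V E x y z \<longleftrightarrow> (\<exists>xs. geodesic V E y z xs \<and> x \<in> set xs)"

definition resolving_set :: "'a set \<Rightarrow> ('a \<Rightarrow> 'a \<Rightarrow> bool) \<Rightarrow> 'a set \<Rightarrow> bool" where
  "resolving_set V E R \<longleftrightarrow> R \<subseteq> V \<and>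
     (\<forall>x\<in>V. \<forall>y\<in>V. x \<noteq> y \<longrightarrow> (\<exists>z\<in>R. gdist V E x z \<noteq> gdist V E y z))"

definition strong_resolving_set :: "'a set \<Rightarrow> ('a \<Rightarrow> 'a \<Rightarrow> bool) \<Rightarrow> 'a set \<Rightarrow> bool" where
  "strong_resolving_set V E S \<longleftrightarrow> S \<subseteq> V \<and>
     (\<forall>x\<in>V. \<forall>y\<in>V. x \<noteq> y \<longrightarrow>
        (\<exists>z\<in>S. on_geodesic V E x y z \<or> on_geodesic V E y x z))"

text \<open>Maker--Breaker game on board V with winning condition W on Maker's final set.
Position: Maker's vertices M, Breaker's vertices B, and the flag mturn
(True = Maker to move).\<close>

inductive maker_wins :: "'a set \<Rightarrow> ('a set \<Rightarrow> bool) \<Rightarrow> 'a set \<Rightarrow> 'a set \<Rightarrow> bool \<Rightarrow> bool"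
  for V :: "'a set" and W :: "'a set \<Rightarrow> bool" where
  mw_end: "V - (M \<union> B) = {} \<Longrightarrow> W M \<Longrightarrow> maker_wins V W M B t"
| mw_maker: "v \<in> V - (M \<union> B) \<Longrightarrow> maker_wins V W (insert v M) B False
             \<Longrightarrow> maker_wins V W M B True"
| mw_breaker: "V - (M \<union> B) \<noteq> {} \<Longrightarrow> (\<forall>v\<in>V - (M \<union> B). maker_wins V W M (insert v B) True)
             \<Longrightarrow> maker_wins V W M B False"

inductive breaker_wins :: "'a set \<Rightarrow> ('a set \<Rightarrow> bool) \<Rightarrow> 'a set \<Rightarrow> 'a set \<Rightarrow> bool \<Rightarrow> bool"
  for V :: "'a set" and W :: "'a set \<Rightarrow> bool" where
  bw_end: "V - (M \<union> B) = {} \<Longrightarrow> \<not> W M \<Longrightarrow> breaker_wins V W M B t"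
| bw_breaker: "v \<in> V - (M \<union> B) \<Longrightarrow> breaker_wins V W M (insert v B) True
             \<Longrightarrow> breaker_wins V W M B False"
| bw_maker: "V - (M \<union> B) \<noteq> {} \<Longrightarrow> (\<forall>v\<in>V - (M \<union> B). breaker_wins V W (insert v M) B False)
             \<Longrightarrow> breaker_wins V W M B True"

datatype outcome = OM | OB | ON

text \<open>has_outcome V W o: the game (board V, winning condition W) has outcome o.
M-game starts from (empty, empty, Maker to move), B-game from (empty, empty, Breaker to move).\<close>

definition has_outcome :: "'a set \<Rightarrow> ('a set \<Rightarrow> bool) \<Rightarrow> outcome \<Rightarrow> bool" where
  "has_outcome V W oc \<longleftrightarrow>
     (case oc of
        OM \<Rightarrow> maker_wins V W {} {} True \<and> maker_wins V W {} {} False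
      | OB \<Rightarrow> breaker_wins V W {} {} True \<and> breaker_wins V W {} {} False
      | ON \<Rightarrow> maker_wins V W {} {} True \<and> breaker_wins V W {} {} False)"

definition O_R :: "'a set \<Rightarrow> ('a \<Rightarrow> 'a \<Rightarrow> bool) \<Rightarrow> outcome \<Rightarrow> bool" where
  "O_R V E oc \<longleftrightarrow> has_outcome V (\<lambda>M. \<exists>R\<subseteq>M. resolving_set V E R) oc"

definition O_SR :: "'a set \<Rightarrow> ('a \<Rightarrow> 'a \<Rightarrow> bool) \<Rightarrow> outcome \<Rightarrow> bool" where
  "O_SR V E oc \<longleftrightarrow> has_outcome V (\<lambda>M. \<exists>S\<subseteq>M. strong_resolving_set V E S) oc"

end

theory Submission
  imports Defs
begin

lemma drop_walk:
  assumes "walk_between V E y z xs" "i < length xs"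
  shows "walk_between V E (xs ! i) z (drop i xs)"
  using assms unfolding walk_between_def walk_def
  by (auto simp: hd_drop_conv_nth last_drop dest: in_set_dropD)

lemma geo_less:
  assumes "on_geodesic V E x y z" "x \<noteq> y"
  shows "gdist V E x z < gdist V E y z"
proof -
  obtain xs where g: "geodesic V E y z xs" and xin: "x \<in> set xs"
    using assms(1) unfolding on_geodesic_def by blast
  obtain i where i: "i < length xs" "xs ! i = x" using xin by (meson in_set_conv_nth)
  have wb: "walk_between V E y z xs" and len: "length xs = Suc (gdist V E y z)"
    using g unfolding geodesic_def by auto
  have "i \<noteq> 0"
  proof
    assume "i = 0"
    then show False using i wb assms(2) unfolding walk_between_def walk_def
      by (auto simp: hd_conv_nth)
  qed
  have w2: "walk_between V E x z (drop i xs)" using drop_walk[OF wb i(1)] i(2) by simp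
  have "gdist V E x z \<le> length xs - i - 1"
    unfolding gdist_def
    by (rule Least_le) (use w2 i(1) in auto)
  then show ?thesis using len \<open>i \<noteq> 0\<close> i(1) by linarith
qed

lemma strong_imp_res:
  assumes "strong_resolving_set V E S" shows "resolving_set V E S"
  unfolding resolving_set_def
proof (intro conjI ballI impI)
  show "S \<subseteq> V" using assms unfolding strong_resolving_set_def by auto
next
  fix x y assume "x \<in> V" "y \<in> V" "x \<noteq> y"
  then obtain z where "z \<in> S" "on_geodesic V E x y z \<or> on_geodesic V E y x z"
    using assms unfolding strong_resolving_set_def by blast
  moreover have "gdist V E x z \<noteq> gdist V E y z"
  proof (cases "on_geodesic V E x y z")
    case True then show ?thesis using geo_less[of V E x y z] \<open>x \<noteq> y\<close> by simp
  next
    case False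
    then have "on_geodesic V E y x z" using \<open>on_geodesic V E x y z \<or> on_geodesic V E y x z\<close> by simp
    then show ?thesis using geo_less[of V E y x z] \<open>x \<noteq> y\<close> by simp
  qed
  ultimately show "\<exists>z\<in>S. gdist V E x z \<noteq> gdist V E y z" by blast
qed

lemma maker_mono_W:
  assumes "maker_wins V W1 M B t" "\<And>A. W1 A \<Longrightarrow> W2 A"
  shows "maker_wins V W2 M B t"
  using assms(1)
proof induction
  case (mw_end M B t) then show ?case using assms(2) by (intro maker_wins.mw_end) blast+
next
  case (mw_maker v M B) then show ?case by (intro maker_wins.mw_maker)
next
  case (mw_breaker M B) then show ?case by (intro maker_wins.mw_breaker) blast+
qed

lemma bw_notW:
  assumes "breaker_wins V W M B t" "\<And>A C. W A \<Longrightarrow> A \<subseteq> C \<Longrightarrow> W C"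
  shows "\<not> W M"
  using assms(1)
proof induction
  case (bw_end M B t) then show ?case by blast
next
  case (bw_breaker v M B) then show ?case by blast
next
  case (bw_maker M B)
  then obtain u where u: "u \<in> V - (M \<union> B)" by blast
  then have "\<not> W (insert u M)" using bw_maker(2) by blast
  then show ?case using assms(2)[of M "insert u M"] by blast
qed

lemma bw_superB:
  assumes "breaker_wins V W M B t" "\<And>A C. W A \<Longrightarrow> A \<subseteq> C \<Longrightarrow> W C"
  shows "B \<subseteq> B' \<Longrightarrow> breaker_wins V W M B' t"
  using assms(1)
proof (induction arbitrary: B' rule: breaker_wins.induct)
  case (bw_end M B t)
  have "V - (M \<union> B') = {}" using bw_end(1,3) by blast
  then show ?case using bw_end(2) by (rule breaker_wins.bw_end)
next
  case (bw_breaker v M B)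
  have nw: "\<not> W M" using bw_notW[of V W M "insert v B" True] bw_breaker(2) assms(2) by blast
  show ?case
  proof (cases "V - (M \<union> B') = {}")
    case True then show ?thesis using nw by (rule breaker_wins.bw_end)
  next
    case False
    obtain w where w: "w \<in> V - (M \<union> B')" "v \<in> B' \<or> w = v"
      using False bw_breaker(1) by blast
    have "insert v B \<subseteq> insert w B'" using w bw_breaker(4) by blast
    then have "breaker_wins V W M (insert w B') True" by (rule bw_breaker(3))
    with w(1) show ?thesis by (rule breaker_wins.bw_breaker)
  qed
next
  case (bw_maker M B)
  have bwM: "breaker_wins V W M B True"
  proof (rule breaker_wins.bw_maker)
    show "V - (M \<union> B) \<noteq> {}" by (rule bw_maker(1))
    show "\<forall>v\<in>V - (M \<union> B). breaker_wins V W (insert v M) B False"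
      using bw_maker(2) by blast
  qed
  have nw: "\<not> W M" using bw_notW[of V W M B True] bwM assms(2) by blast
  show ?case
  proof (cases "V - (M \<union> B') = {}")
    case True then show ?thesis using nw by (rule breaker_wins.bw_end)
  next
    case False
    show ?thesis
    proof (rule breaker_wins.bw_maker)
      show "V - (M \<union> B') \<noteq> {}" by (rule False)
      show "\<forall>v\<in>V - (M \<union> B'). breaker_wins V W (insert v M) B' False"
      proof
        fix v assume v: "v \<in> V - (M \<union> B')"
        then have "v \<in> V - (M \<union> B)" using bw_maker(3) by blast
        then have "B \<subseteq> B' \<Longrightarrow> breaker_wins V W (insert v M) B' False" using bw_maker(2) by blast
        then show "breaker_wins V W (insert v M) B' False" using bw_maker(3) by blast
      qed
    qed
  qed
qed

lemma bw_first:
  assumes "breaker_wins V W M B True" "\<And>A C. W A \<Longrightarrow> A \<subseteq> C \<Longrightarrow> W C"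
  shows "breaker_wins V W M B False"
proof (cases "V - (M \<union> B) = {}")
  case True
  have "\<not> W M" using bw_notW[of V W M B True] assms by blast
  with True show ?thesis by (rule breaker_wins.bw_end)
next
  case False
  then obtain v where v: "v \<in> V - (M \<union> B)" by blast
  have "B \<subseteq> insert v B" by blast
  then have "breaker_wins V W M (insert v B) True"
    using bw_superB[of V W M B True "insert v B"] assms by blast
  with v show ?thesis by (rule breaker_wins.bw_breaker)
qed

lemma determ:
  assumes "finite V"
  shows "card (V - (M \<union> B)) = n \<Longrightarrow> maker_wins V W M B t \<or> breaker_wins V W M B t"
proof (induction n arbitrary: M B t)
  case 0
  then have "V - (M \<union> B) = {}" using assms by simp
  then show ?case by (cases "W M") (auto intro: maker_wins.mw_end breaker_wins.bw_end)
next
  case (Suc n)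
  then have ne: "V - (M \<union> B) \<noteq> {}" by (metis card.empty Zero_not_Suc)
  have cM: "\<And>v. v \<in> V - (M \<union> B) \<Longrightarrow> card (V - (insert v M \<union> B)) = n"
    using Suc(2) assms by (auto simp: card_Diff_singleton Diff_insert[symmetric])
  have cB: "\<And>v. v \<in> V - (M \<union> B) \<Longrightarrow> card (V - (M \<union> insert v B)) = n"
    using cM by (metis Un_insert_left Un_insert_right)
  show ?case
  proof (cases t)
    case True
    show ?thesis
    proof (cases "\<exists>v\<in>V - (M \<union> B). maker_wins V W (insert v M) B False")
      case True then show ?thesis using \<open>t\<close> by (auto intro: maker_wins.mw_maker)
    next
      case False
      then have "\<forall>v\<in>V - (M \<union> B). breaker_wins V W (insert v M) B False"
        using Suc.IH cM by blast
      then show ?thesis using \<open>t\<close> ne by (auto intro: breaker_wins.bw_maker)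
    qed
  next
    case f: False
    show ?thesis
    proof (cases "\<exists>v\<in>V - (M \<union> B). breaker_wins V W M (insert v B) True")
      case True then show ?thesis using f by (auto intro: breaker_wins.bw_breaker)
    next
      case False
      then have "\<forall>v\<in>V - (M \<union> B). maker_wins V W M (insert v B) True"
        using Suc.IH cB by blast
      then show ?thesis using f ne by (auto intro: maker_wins.mw_breaker)
    qed
  qed
qed

theorem mainTheorem5:
  fixes V :: "'a set" and E :: "'a \<Rightarrow> 'a \<Rightarrow> bool"
  assumes "connected_graph V E"
  shows "\<exists>osr orr. O_SR V E osr \<and> O_R V E orr \<and>
           (osr, orr) \<in> {(OB, OB), (OB, ON), (OB, OM), (ON, ON), (ON, OM), (OM, OM)}"
proof -
  have fin: "finite V" using assms unfolding connected_graph_def simple_graph_def by auto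
  define WS where "WS = (\<lambda>M. \<exists>S\<subseteq>M. strong_resolving_set V E S)"
  define WR where "WR = (\<lambda>M. \<exists>R\<subseteq>M. resolving_set V E R)"
  have monS: "\<And>A C. WS A \<Longrightarrow> A \<subseteq> C \<Longrightarrow> WS C" unfolding WS_def by blast
  have monR: "\<And>A C. WR A \<Longrightarrow> A \<subseteq> C \<Longrightarrow> WR C" unfolding WR_def by blast
  have SR: "\<And>A. WS A \<Longrightarrow> WR A" unfolding WS_def WR_def using strong_imp_res by blast
  have D: "\<And>W t. maker_wins V W {} {} t \<or> breaker_wins V W {} {} t"
    using determ[OF fin] by blast
  have OS: "O_SR V E oc = has_outcome V WS oc" for oc unfolding O_SR_def WS_def ..
  have OR: "O_R V E oc = has_outcome V WR oc" for oc unfolding O_R_def WR_def ..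
  have hR2: "\<exists>orr. O_R V E orr \<and> orr \<in> {ON, OM}"
    if rT: "maker_wins V WR {} {} True"
  proof (cases "maker_wins V WR {} {} False")
    case True
    then have "O_R V E OM" using rT unfolding OR has_outcome_def by simp
    then show ?thesis by blast
  next
    case False
    then have "breaker_wins V WR {} {} False" using D by blast
    then have "O_R V E ON" using rT unfolding OR has_outcome_def by simp
    then show ?thesis by blast
  qed
  have hR: "\<exists>orr. O_R V E orr \<and> orr \<in> {OB, ON, OM}"
  proof (cases "maker_wins V WR {} {} True")
    case True then show ?thesis using hR2 by blast
  next
    case False
    then have b: "breaker_wins V WR {} {} True" using D by blast
    then have "breaker_wins V WR {} {} False" using bw_first[of V WR "{}" "{}"] monR by blast
    then have "O_R V E OB" using b unfolding OR has_outcome_def by simp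
    then show ?thesis by blast
  qed
  show ?thesis
  proof (cases "maker_wins V WS {} {} True")
    case mT: True
    then have rT: "maker_wins V WR {} {} True" using maker_mono_W SR by blast
    show ?thesis
    proof (cases "maker_wins V WS {} {} False")
      case True
      then have "maker_wins V WR {} {} False" using maker_mono_W SR by blast
      then have "O_SR V E OM" "O_R V E OM" using True mT rT unfolding OS OR has_outcome_def by auto
      then show ?thesis by blast
    next
      case False
      then have "breaker_wins V WS {} {} False" using D by blast
      then have "O_SR V E ON" using mT unfolding OS has_outcome_def by simp
      then show ?thesis using hR2[OF rT] by blast
    qed
  next
    case False
    then have "breaker_wins V WS {} {} True" using D by blast
    then have "O_SR V E OB" using bw_first[of V WS "{}" "{}"] monS unfolding OS has_outcome_def by auto
    then show ?thesis using hR by blast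
  qed
qed

end
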